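(* Let $\mathcal{M}$ be a matroid of rank $c$ on $[n]$ and order $G(J(\mathcal{M}))$ by the iterated-contraction order $\preceq$ along an ordered basis $(v_1,\ldots,v_c)$ (see context). Let $N\in G(J(\mathcal{M}))$, $N\neq\min G(J(\mathcal{M}))$. Then $$C_N=\begin{cases}J(\mathcal{M}(\gamma_N)^0), & \text{if } i_N=0,\\ J(\mathcal{M}'(\gamma_N)^0), & \text{if } i_N>0,\ \text{where }\mathcal{M}'=\mathcal{M}/\{v_1,\ldots,v_{i_N}\}.\end{cases}$$ Moreover, for any given $N$ one can choose such an ordering with $i_N=0$.
   Context: $R=\mathbb{K}[x_1,\ldots,x_n]$, $\mathbb{K}$ a field. For a matroid $\mathcal{N}$ on $E\subseteq[n]$, $J(\mathcal{N})=\bigcap_{F\in\mathcal{B}(\mathcal{N})}(x_i:i\in F)$, formed in $\mathbb{K}[x_i:i\in E]$ and extended to $R$. $\mathcal{M}/A$ is contraction by an independent set $A$. $G(\cdot)$ is the set of minimal monomial generators. For a monomial $N=\prod x_i^{a_i}$, $\gamma_N(i)=a_i$ and $\operatorname{supp}\gamma_N=\{i:a_i>0\}$. For a matroid $\mathcal{N}$ and $N\in G(J(\mathcal{N}))$ ($\gamma_N$ is then a basic $1$-cover of $\mathcal{N}$), $\mathcal{N}(\gamma_N)$ is the matroid whose bases are the bases $F$ of $\mathcal{N}$ with $\sum_{i\in F}\gamma_N(i)=1$, and $\mathcal{N}(\gamma_N)^0$ is its restriction to the complement of $\operatorname{supp}\gamma_N$. Order: $J_i=J(\mathcal{M}/\{v_1,\ldots,v_i\})$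 for $0\le i\le c$; one has $G(J_c)\subseteq\cdots\subseteq G(J_0)$. Choose any total order on each $G(J_i)-G(J_{i+1})$; for $N\in G(J)$ let $i_N$ be the index with $N\in G(J_i)-G(J_{i+1})$; set $N\prec N'$ iff $i_N>i_{N'}$, or $i_N=i_{N'}$ and $N$ precedes $N'$ in the chosen order. $C_N=(N'\in G(J):N'\prec N):N$. *)

theory Defs
  imports Main
begin

text \<open>Monomials of R = K[x_1..x_n] are encoded by exponent vectors nat => nat,
 supported in {1..n}. All ideals occurring are monomial ideals, which are
 determined by the set of monomials they contain; an ideal is encoded by that set.\<close>

type_synonym mono = "nat \<Rightarrow> nat"

definition monoms :: "nat \<Rightarrow> mono set" where
  "monoms n = {a. \<forall>i. a i \<noteq> 0 \<longrightarrow> i \<in> {1..n}}"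

definition is_matroid :: "nat set \<Rightarrow> nat set set \<Rightarrow> bool" where
  "is_matroid E B \<longleftrightarrow> finite E \<and> B \<noteq> {} \<and> (\<forall>F\<in>B. F \<subseteq> E) \<and>
     (\<forall>F1\<in>B. \<forall>F2\<in>B. \<forall>x\<in>F1 - F2. \<exists>y\<in>F2 - F1. insert y (F1 - {x}) \<in> B)"

text \<open>Monomials of the prime ideal (x_i : i in F).\<close>
definition var_ideal :: "nat \<Rightarrow> nat set \<Rightarrow> mono set" where
  "var_ideal n F = {a \<in> monoms n. \<exists>i\<in>F. 0 < a i}"

definition J :: "nat \<Rightarrow> nat set set \<Rightarrow> mono set" where
  "J n B = {a \<in> monoms n. \<forall>F\<in>B. a \<in> var_ideal n F}"

text \<open>Minimal monomial generators (divisibility = pointwise order).\<close>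
definition mingens :: "mono set \<Rightarrow> mono set" where
  "mingens I = {m \<in> I. \<forall>m'\<in>I. m' \<le> m \<longrightarrow> m' = m}"

text \<open>Bases of the contraction by an independent set A.\<close>
definition contract :: "nat set set \<Rightarrow> nat set \<Rightarrow> nat set set" where
  "contract B A = {F - A | F. F \<in> B \<and> A \<subseteq> F}"

definition restrict :: "nat set set \<Rightarrow> nat set \<Rightarrow> nat set set" where
  "restrict B S = {X \<in> (\<lambda>F. F \<inter> S) ` B. \<forall>Y \<in> (\<lambda>F. F \<inter> S) ` B. X \<subseteq> Y \<longrightarrow> X = Y}"

definition cover_matroid :: "nat set set \<Rightarrow> mono \<Rightarrow> nat set set" where
  "cover_matroid B g = {F \<in> B. (\<Sum>i\<in>F. g i) = 1}"

definition cover_matroid0 :: "nat set \<Rightarrow> nat set set \<Rightarrow> mono \<Rightarrow> nat set set" where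
  "cover_matroid0 E B g = restrict (cover_matroid B g) (E - {i. g i \<noteq> 0})"

definition Jseq :: "nat \<Rightarrow> nat set set \<Rightarrow> nat list \<Rightarrow> nat \<Rightarrow> mono set" where
  "Jseq n B vs i = J n (contract B (set (take i vs)))"

definition level :: "nat \<Rightarrow> nat set set \<Rightarrow> nat list \<Rightarrow> nat \<Rightarrow> mono set" where
  "level n B vs i = mingens (Jseq n B vs i) -
     (if i < length vs then mingens (Jseq n B vs (Suc i)) else {})"

definition level_index :: "nat \<Rightarrow> nat set set \<Rightarrow> nat list \<Rightarrow> mono \<Rightarrow> nat" where
  "level_index n B vs N = (THE i. i \<le> length vs \<and> N \<in> level n B vs i)"

text \<open>The order: r i is the chosen strict total order on level i.\<close>
definition prec :: "nat \<Rightarrow> nat set set \<Rightarrow> nat list \<Rightarrow> (nat \<Rightarrow> mono rel) \<Rightarrow> mono \<Rightarrow> mono \<Rightarrow> bool" where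
  "prec n B vs r N N' \<longleftrightarrow> level_index n B vs N > level_index n B vs N' \<or>
     (level_index n B vs N = level_index n B vs N' \<and> (N, N') \<in> r (level_index n B vs N))"

text \<open>C_N = (N' in G(J) : N' prec N) : N, as a set of monomials.\<close>
definition colon_prec :: "nat \<Rightarrow> nat set set \<Rightarrow> nat list \<Rightarrow> (nat \<Rightarrow> mono rel) \<Rightarrow> mono \<Rightarrow> mono set" where
  "colon_prec n B vs r N = {m \<in> monoms n. \<exists>N'\<in>mingens (J n B). prec n B vs r N' N \<and> N' \<le> (\<lambda>i. m i + N i)}"

end

theory Submission
  imports Defs
begin

lemma J_iff: "m \<in> J n B \<longleftrightarrow> m \<in> monoms n \<and> (\<forall>F\<in>B. \<exists>i\<in>F. 0 < m i)"
  by (auto simp: J_def var_ideal_def)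

lemma mingensD: "m \<in> mingens I \<Longrightarrow> m \<in> I" "m \<in> mingens I \<Longrightarrow> m' \<in> I \<Longrightarrow> m' \<le> m \<Longrightarrow> m' = m"
  by (auto simp: mingens_def)

lemma mingensI: "m \<in> I \<Longrightarrow> (\<And>m'. m' \<in> I \<Longrightarrow> m' \<le> m \<Longrightarrow> m' = m) \<Longrightarrow> m \<in> mingens I"
  by (auto simp: mingens_def)

lemma contract_empty: "contract B {} = B"
  by (auto simp: contract_def)

lemma mingens_le1:
  assumes "m \<in> mingens (J n B)" shows "m i \<le> 1"
proof -
  let ?m = "\<lambda>i. min (m i) 1"
  have mJ: "m \<in> J n B" using mingensD(1)[OF assms] .
  have "?m \<in> J n B" using mJ by (auto simp: J_iff monoms_def)
  moreover have "?m \<le> m" by (auto simp: le_fun_def)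
  ultimately have "?m = m" using mingensD(2)[OF assms] by blast
  then show ?thesis by (metis min.cobounded2)
qed

lemma exists_mingen_below:
  assumes "a \<in> I" "I \<subseteq> monoms n"
  shows "\<exists>m\<in>mingens I. m \<le> a"
  using assms(1)
proof (induction "\<Sum>i\<in>{1..n}. a i" arbitrary: a rule: less_induct)
  case less
  show ?case
  proof (cases "a \<in> mingens I")
    case True then show ?thesis by blast
  next
    case False
    then obtain a' where a': "a' \<in> I" "a' \<le> a" "a' \<noteq> a" using less.prems by (auto simp: mingens_def)
    then obtain j where j: "a' j \<noteq> a j" by auto
    have "j \<in> {1..n}"
    proof (rule ccontr)
      assume "j \<notin> {1..n}"
      then have "a j = 0" "a' j = 0" using assms(2) a'(1) less.prems by (auto simp: monoms_def)
      then show False using j by simp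
    qed
    have lt: "a' j < a j" using a'(2) j by (simp add: le_fun_def order_less_le)
    have "(\<Sum>i\<in>{1..n}. a' i) < (\<Sum>i\<in>{1..n}. a i)"
      by (rule sum_strict_mono_ex1) (use a'(2) lt \<open>j \<in> {1..n}\<close> in \<open>auto simp: le_fun_def\<close>)
    then obtain m where "m \<in> mingens I" "m \<le> a'" using less.hyps a'(1) by blast
    then show ?thesis using a'(2) order_trans by blast
  qed
qed

lemma sum_one_D:
  fixes N :: mono
  assumes "finite F" "(\<Sum>i\<in>F. N i) = 1"
  shows "\<exists>e\<in>F. N e = 1 \<and> (\<forall>x\<in>F. x \<noteq> e \<longrightarrow> N x = 0)"
proof -
  obtain e where e: "e \<in> F" "N e > 0"
    using assms by (metis gr0I sum.neutral zero_neq_one)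
  have "(\<Sum>i\<in>F. N i) = N e + (\<Sum>i\<in>F - {e}. N i)"
    using assms(1) e(1) by (simp add: sum.remove)
  then have "N e = 1" "(\<Sum>i\<in>F - {e}. N i) = 0" using assms(2) e(2) by linarith+
  then show ?thesis using e(1) assms(1) by auto
qed

lemma sum_one_I:
  fixes N :: mono
  assumes "finite F" "e \<in> F" "N e = 1" "\<forall>x\<in>F. x \<noteq> e \<longrightarrow> N x = 0"
  shows "(\<Sum>i\<in>F. N i) = 1"
proof -
  have "(\<Sum>i\<in>F. N i) = N e + (\<Sum>i\<in>F - {e}. N i)"
    using assms(1,2) by (simp add: sum.remove)
  then show ?thesis using assms by simp
qed


definition exch :: "nat set set \<Rightarrow> bool" where
  "exch B \<longleftrightarrow> (\<forall>F1\<in>B. \<forall>F2\<in>B. \<forall>x\<in>F1 - F2. \<exists>y\<in>F2 - F1. insert y (F1 - {x}) \<in> B)"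

lemma exch_matroid: "is_matroid E B \<Longrightarrow> exch B"
  by (simp add: is_matroid_def exch_def)

lemma exchD:
  assumes "exch B" "F1 \<in> B" "F2 \<in> B" "x \<in> F1" "x \<notin> F2"
  obtains y where "y \<in> F2" "y \<notin> F1" "insert y (F1 - {x}) \<in> B"
  using assms unfolding exch_def by blast

lemma exch_contract:
  assumes "exch B" shows "exch (contract B A)"
  unfolding exch_def
proof (intro ballI)
  fix G1 G2 x assume G1: "G1 \<in> contract B A" and G2: "G2 \<in> contract B A" and x: "x \<in> G1 - G2"
  obtain F1 where F1: "F1 \<in> B" "A \<subseteq> F1" "G1 = F1 - A" using G1 by (auto simp: contract_def)
  obtain F2 where F2: "F2 \<in> B" "A \<subseteq> F2" "G2 = F2 - A" using G2 by (auto simp: contract_def)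
  have x1: "x \<in> F1" and x2: "x \<notin> F2" and "x \<notin> A" using x F1 F2 by auto
  obtain y where y0: "y \<in> F2" "y \<notin> F1" "insert y (F1 - {x}) \<in> B"
    using exchD[OF assms F1(1) F2(1) x1 x2] by blast
  then have y: "y \<in> F2 - F1" "insert y (F1 - {x}) \<in> B" by auto
  have "y \<notin> A" using y F1 by auto
  have "insert y (G1 - {x}) = insert y (F1 - {x}) - A" using F1 \<open>y \<notin> A\<close> by auto
  moreover have "A \<subseteq> insert y (F1 - {x})" using F1 \<open>x \<notin> A\<close> by auto
  ultimately have "insert y (G1 - {x}) \<in> contract B A" using y by (auto simp: contract_def)
  moreover have "y \<in> G2 - G1" using y F1 F2 \<open>y \<notin> A\<close> by auto
  ultimately show "\<exists>y\<in>G2 - G1. insert y (G1 - {x}) \<in> contract B A" by blast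
qed

lemma basis_with_v:
  assumes "exch B" "\<forall>F\<in>B. finite F" "H \<in> B" "A \<subseteq> H" "P \<in> B" "insert v A \<subseteq> P"
  shows "\<exists>G\<in>B. insert v A \<subseteq> G \<and> G - {v} \<subseteq> H"
  using assms(5,6)
proof (induction "card (P - H)" arbitrary: P rule: less_induct)
  case less
  show ?case
  proof (cases "P - {v} \<subseteq> H")
    case True then show ?thesis using less.prems by blast
  next
    case False
    then obtain x where x: "x \<in> P" "x \<notin> H" "x \<noteq> v" by auto
    obtain y where y0: "y \<in> H" "y \<notin> P" "insert y (P - {x}) \<in> B"
      using exchD[OF assms(1) less.prems(1) assms(3) x(1) x(2)] by blast
    then have y: "y \<in> H - P" "insert y (P - {x}) \<in> B" by auto
    let ?P = "insert y (P - {x})"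
    have xA: "x \<notin> A" using x assms(4) by auto
    have sub: "insert v A \<subseteq> ?P" using less.prems(2) x xA by auto
    have "?P - H = (P - H) - {x}" using y by auto
    moreover have "finite (P - H)" using assms(2) less.prems(1) by auto
    moreover have "x \<in> P - H" using x by auto
    ultimately have "card (?P - H) < card (P - H)" by (metis card_Diff1_less)
    then show ?thesis using less.hyps y(2) sub by blast
  qed
qed

lemma J_insert_to:
  assumes "exch B" "\<forall>F\<in>B. finite F" "P \<in> B" "insert v A \<subseteq> P"
    "w \<in> J n (contract B (insert v A))" "w v = 0"
  shows "w \<in> J n (contract B A)"
  unfolding J_iff
proof (intro conjI ballI)
  show "w \<in> monoms n" using assms(5) by (simp add: J_iff)
  fix G assume "G \<in> contract B A"
  then obtain H where H: "H \<in> B" "A \<subseteq> H" "G = H - A" by (auto simp: contract_def)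
  obtain G' where G': "G' \<in> B" "insert v A \<subseteq> G'" "G' - {v} \<subseteq> H"
    using basis_with_v[OF assms(1,2) H(1,2) assms(3,4)] by blast
  have "G' - insert v A \<in> contract B (insert v A)" using G' by (auto simp: contract_def)
  then have "\<exists>z\<in>G' - insert v A. 0 < w z" using assms(5) unfolding J_iff by blast
  then obtain z where "z \<in> G' - insert v A" "0 < w z" by blast
  then show "\<exists>i\<in>G. 0 < w i" using G' H by auto
qed

lemma J_insert_from:
  assumes "w \<in> J n (contract B A)" "w v = 0"
  shows "w \<in> J n (contract B (insert v A))"
  unfolding J_iff
proof (intro conjI ballI)
  show "w \<in> monoms n" using assms(1) by (simp add: J_iff)
  fix G assume "G \<in> contract B (insert v A)"
  then obtain H where H: "H \<in> B" "insert v A \<subseteq> H" "G = H - insert v A" by (auto simp: contract_def)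
  have "H - A \<in> contract B A" using H by (auto simp: contract_def)
  then obtain z where "z \<in> H - A" "0 < w z" using assms(1) by (auto simp: J_iff)
  then show "\<exists>i\<in>G. 0 < w i" using H assms(2) by (intro bexI[of _ z]) auto
qed

lemma mingens_zero:
  assumes "D \<in> mingens (J n (contract B (insert v A)))"
  shows "D v = 0"
proof -
  let ?D = "D(v := 0)"
  have DJ: "D \<in> J n (contract B (insert v A))" using mingensD(1)[OF assms] .
  have "?D \<in> J n (contract B (insert v A))"
    unfolding J_iff
  proof (intro conjI ballI)
    show "?D \<in> monoms n" using DJ by (auto simp: J_iff monoms_def)
    fix G assume G: "G \<in> contract B (insert v A)"
    then have vG: "v \<notin> G" by (auto simp: contract_def)
    have "\<exists>i\<in>G. 0 < D i" using DJ G unfolding J_iff by blast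
    then show "\<exists>i\<in>G. 0 < ?D i" using vG by (metis fun_upd_other)
  qed
  moreover have "?D \<le> D" by (auto simp: le_fun_def)
  ultimately have "?D = D" using mingensD(2)[OF assms] by blast
  then show ?thesis by (metis fun_upd_same)
qed

lemma chain_step:
  assumes "exch B" "\<forall>F\<in>B. finite F" "P \<in> B" "insert v A \<subseteq> P"
    "D \<in> mingens (J n (contract B (insert v A)))"
  shows "D \<in> mingens (J n (contract B A))"
proof (rule mingensI)
  have Dv: "D v = 0" using mingens_zero[OF assms(5)] .
  show "D \<in> J n (contract B A)"
    using J_insert_to[OF assms(1-4) mingensD(1)[OF assms(5)] Dv] .
  fix m' assume m': "m' \<in> J n (contract B A)" "m' \<le> D"
  have "m' v = 0" using m'(2) Dv by (metis le_funD le_zero_eq)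
  then have "m' \<in> J n (contract B (insert v A))" using J_insert_from[OF m'(1)] by blast
  then show "m' = D" using mingensD(2)[OF assms(5)] m'(2) by blast
qed

lemma stay_step:
  assumes "exch B" "\<forall>F\<in>B. finite F" "P \<in> B" "insert v A \<subseteq> P"
    "C \<in> mingens (J n (contract B A))" "C v = 0"
  shows "C \<in> mingens (J n (contract B (insert v A)))"
proof (rule mingensI)
  show "C \<in> J n (contract B (insert v A))"
    using J_insert_from[OF mingensD(1)[OF assms(5)] assms(6)] .
  fix m' assume m': "m' \<in> J n (contract B (insert v A))" "m' \<le> C"
  have "m' v = 0" using m'(2) assms(6) by (metis le_funD le_zero_eq)
  then have "m' \<in> J n (contract B A)" using J_insert_to[OF assms(1-4) m'(1)] by blast
  then show "m' = C" using mingensD(2)[OF assms(5)] m'(2) by blast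
qed

lemma fund_cocircuit_unique:
  assumes "exch B'" "\<forall>F\<in>B'. F \<subseteq> {1..n}" "F \<in> B'" "e \<in> F"
    "C \<in> mingens (J n B')" "\<forall>x\<in>F. 0 < C x \<longrightarrow> x = e"
    "D \<in> mingens (J n B')" "\<forall>x\<in>F. 0 < D x \<longrightarrow> x = e"
  shows "C = D"
proof -
  define K :: mono where "K x = (if x = e \<or> insert x (F - {e}) \<in> B' then 1 else 0)" for x
  have KJ: "K \<in> J n B'"
    unfolding J_iff
  proof (intro conjI ballI)
    have "e \<in> {1..n}" using assms(2,3,4) by blast
    then show "K \<in> monoms n"
      unfolding monoms_def K_def using assms(2) by (auto simp del: atLeastAtMost_iff)
    fix H assume H: "H \<in> B'"
    show "\<exists>i\<in>H. 0 < K i"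
    proof (cases "e \<in> H")
      case True then show ?thesis by (auto simp: K_def)
    next
      case False
      obtain y where "y \<in> H" "y \<notin> F" "insert y (F - {e}) \<in> B'"
        using exchD[OF assms(1,3) H assms(4) False] by blast
      then show ?thesis by (auto simp: K_def)
    qed
  qed
  have below: "K \<le> X" if X: "X \<in> mingens (J n B')" "\<forall>x\<in>F. 0 < X x \<longrightarrow> x = e" for X
  proof -
    have XJ: "X \<in> J n B'" using mingensD(1)[OF X(1)] .
    have "X x \<ge> K x" for x
    proof (cases "x = e \<or> insert x (F - {e}) \<in> B'")
      case False then show ?thesis by (simp add: K_def)
    next
      case True
      have "0 < X x"
      proof (cases "x = e")
        case True
        obtain z where "z \<in> F" "0 < X z" using XJ assms(3) by (auto simp: J_iff)
        then show ?thesis using X(2) True by auto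
      next
        case False
        then have "insert x (F - {e}) \<in> B'" using True by simp
        then have "\<exists>z\<in>insert x (F - {e}). 0 < X z" using XJ unfolding J_iff by blast
        then obtain z where "z \<in> insert x (F - {e})" "0 < X z" by blast
        then show ?thesis using X(2) by auto
      qed
      then show ?thesis by (simp add: K_def)
    qed
    then show ?thesis by (simp add: le_fun_def)
  qed
  have "K = C" using mingensD(2)[OF assms(5) KJ] below[OF assms(5,6)] .
  moreover have "K = D" using mingensD(2)[OF assms(7) KJ] below[OF assms(7,8)] .
  ultimately show ?thesis by simp
qed


lemma set_take_Suc: "i < length vs \<Longrightarrow> set (take (Suc i) vs) = insert (vs!i) (set (take i vs))"
  by (simp add: take_Suc_conv_app_nth)

lemma set_take_Suc_sub: "i < length vs \<Longrightarrow> insert (vs!i) (set (take i vs)) \<subseteq> set vs"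
  by (metis set_take_Suc set_take_subset)

lemma Jseq_Suc: "i < length vs \<Longrightarrow> Jseq n B vs (Suc i) = J n (contract B (insert (vs!i) (set (take i vs))))"
  by (simp add: Jseq_def set_take_Suc)

lemma chain:
  assumes "exch B" "\<forall>F\<in>B. finite F" "set vs \<in> B" "i \<le> j" "j \<le> length vs"
    "D \<in> mingens (Jseq n B vs j)"
  shows "D \<in> mingens (Jseq n B vs i)"
  using assms(4-6)
proof (induction j)
  case 0 then show ?case by simp
next
  case (Suc j)
  show ?case
  proof (cases "i = Suc j")
    case True then show ?thesis using Suc by simp
  next
    case False
    have jl: "j < length vs" using Suc by simp
    have "D \<in> mingens (J n (contract B (insert (vs!j) (set (take j vs)))))"
      using Suc.prems(3) Jseq_Suc[OF jl] by simp
    then have "D \<in> mingens (Jseq n B vs j)"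
      unfolding Jseq_def by (rule chain_step[OF assms(1,2,3) set_take_Suc_sub[OF jl]])
    moreover have "i \<le> j" using Suc.prems(1) False by simp
    ultimately show ?thesis using Suc.IH jl by simp
  qed
qed

lemma Jseq_0: "Jseq n B vs 0 = J n B"
  by (simp add: Jseq_def contract_empty)

lemma Jseq_len_empty:
  assumes "set vs \<in> B" shows "Jseq n B vs (length vs) = {}"
proof -
  have "{} \<in> contract B (set vs)" using assms unfolding contract_def by blast
  then show ?thesis by (auto simp: Jseq_def J_iff)
qed

lemma level_char:
  assumes "exch B" "\<forall>F\<in>B. finite F" "set vs \<in> B" "D \<in> mingens (J n B)"
  defines "k \<equiv> Max {j. j \<le> length vs \<and> D \<in> mingens (Jseq n B vs j)}"
  shows "level_index n B vs D = k" "k \<le> length vs" "D \<in> mingens (Jseq n B vs k)"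
    "D \<in> level n B vs k" "\<And>j. j \<le> length vs \<Longrightarrow> D \<in> mingens (Jseq n B vs j) \<Longrightarrow> j \<le> k"
proof -
  let ?S = "{j. j \<le> length vs \<and> D \<in> mingens (Jseq n B vs j)}"
  have fin: "finite ?S" by simp
  have "0 \<in> ?S" using assms(4) by (simp add: Jseq_0)
  then have ne: "?S \<noteq> {}" by blast
  have kS: "k \<in> ?S" unfolding k_def using Max_in[OF fin ne] .
  show kl: "k \<le> length vs" using kS by simp
  show kD: "D \<in> mingens (Jseq n B vs k)" using kS by simp
  show mx: "\<And>j. j \<le> length vs \<Longrightarrow> D \<in> mingens (Jseq n B vs j) \<Longrightarrow> j \<le> k"
    unfolding k_def by (rule Max_ge[OF fin]) simp
  show lk: "D \<in> level n B vs k"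
  proof -
    have "D \<notin> mingens (Jseq n B vs (Suc k))" if "k < length vs"
      using mx[of "Suc k"] that by auto
    then show ?thesis using kD by (simp add: level_def)
  qed
  have uniq: "j = k" if "j \<le> length vs" "D \<in> level n B vs j" for j
  proof -
    have jD: "D \<in> mingens (Jseq n B vs j)" using that(2) by (simp add: level_def split: if_splits)
    then have "j \<le> k" using mx that(1) by blast
    moreover have "\<not> j < k"
    proof
      assume "j < k"
      then have "D \<in> mingens (Jseq n B vs (Suc j))"
        using chain[OF assms(1,2,3) _ kl kD, of "Suc j"] by simp
      moreover have "j < length vs" using \<open>j < k\<close> kl by simp
      ultimately show False using that(2) by (simp add: level_def)
    qed
    ultimately show ?thesis by simp
  qed
  show "level_index n B vs D = k"
    unfolding level_index_def
  proof (rule the_equality)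
    show "k \<le> length vs \<and> D \<in> level n B vs k" using kl lk by simp
  next
    fix j assume "j \<le> length vs \<and> D \<in> level n B vs j"
    then show "j = k" using uniq by blast
  qed
qed


lemma restrict_uniform:
  assumes "\<forall>F\<in>B. finite (F \<inter> S) \<and> card (F \<inter> S) = k"
  shows "restrict B S = (\<lambda>F. F \<inter> S) ` B"
proof -
  have eq: "X = Y" if XY: "X \<in> (\<lambda>F. F \<inter> S) ` B" "Y \<in> (\<lambda>F. F \<inter> S) ` B" "X \<subseteq> Y" for X Y
  proof -
    obtain F where F: "F \<in> B" "X = F \<inter> S" using XY(1) by blast
    obtain G where G: "G \<in> B" "Y = G \<inter> S" using XY(2) by blast
    have "finite Y" "card X = card Y" using assms F G by auto
    then show ?thesis using card_subset_eq XY(3) by metis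
  qed
  show ?thesis unfolding restrict_def
  proof (intro set_eqI iffI)
    fix X assume "X \<in> {X \<in> (\<lambda>F. F \<inter> S) ` B. \<forall>Y\<in>(\<lambda>F. F \<inter> S) ` B. X \<subseteq> Y \<longrightarrow> X = Y}"
    then show "X \<in> (\<lambda>F. F \<inter> S) ` B" by blast
  next
    fix X assume "X \<in> (\<lambda>F. F \<inter> S) ` B"
    then show "X \<in> {X \<in> (\<lambda>F. F \<inter> S) ` B. \<forall>Y\<in>(\<lambda>F. F \<inter> S) ` B. X \<subseteq> Y \<longrightarrow> X = Y}"
      using eq by blast
  qed
qed

lemma main_part:
  assumes exB: "exch B" and subB: "\<forall>F\<in>B. F \<subseteq> {1..n}" and cardB: "\<forall>F\<in>B. card F = c"
    and dist: "distinct vs" and vsB: "set vs \<in> B"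
    and ord: "\<forall>i\<le>length vs. strict_linear_order_on (level n B vs i) (r i)"
    and NJ: "N \<in> mingens (J n B)"
  shows "colon_prec n B vs r N =
     J n (cover_matroid0 ({1..n} - set (take (level_index n B vs N) vs))
                          (contract B (set (take (level_index n B vs N) vs))) N)"
proof -
  have finB: "\<forall>F\<in>B. finite F" using subB finite_subset by blast
  define i where "i = level_index n B vs N"
  define A where "A = set (take i vs)"
  define B' where "B' = contract B A"
  define v where "v = vs ! i"
  define S where "S = ({1..n} - A) - {x. N x \<noteq> 0}"
  define cov where "cov = cover_matroid B' N"
  note lcN = level_char[OF exB finB vsB NJ]
  have il: "i \<le> length vs" using lcN(1,2) i_def by simp
  have NJi: "N \<in> mingens (Jseq n B vs i)" using lcN(1,3) i_def by simp
  have Nlev: "N \<in> level n B vs i" using lcN(1,4) i_def by simp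
  have iL: "i < length vs"
  proof (rule ccontr)
    assume "\<not> i < length vs"
    then have "i = length vs" using il by simp
    then show False using NJi Jseq_len_empty[OF vsB] by (simp add: mingens_def)
  qed
  have ins_sub: "insert v A \<subseteq> set vs" unfolding v_def A_def using set_take_Suc_sub[OF iL] .
  have NB': "N \<in> mingens (J n B')" using NJi by (simp add: Jseq_def B'_def A_def)
  have NB'J: "N \<in> J n B'" using mingensD(1)[OF NB'] .
  have Nle1: "\<And>x. N x \<le> 1" using mingens_le1[OF NB'] .
  have exB': "exch B'" unfolding B'_def by (rule exch_contract[OF exB])
  have Nv: "0 < N v"
  proof (rule ccontr)
    assume "\<not> 0 < N v"
    then have "N v = 0" by simp
    from stay_step[OF exB finB vsB ins_sub NB'[unfolded B'_def] this]
    have "N \<in> mingens (Jseq n B vs (Suc i))" using Jseq_Suc[OF iL] by (simp add: v_def A_def)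
    then show False using Nlev iL by (simp add: level_def)
  qed
  have B'sub: "\<forall>F\<in>B'. F \<subseteq> {1..n} - A" using subB by (auto simp: B'_def contract_def)
  have B'fin: "\<forall>F\<in>B'. finite F" using B'sub finite_subset by blast
  have B'card: "\<forall>F\<in>B'. card F = c - card A"
  proof
    fix F assume "F \<in> B'"
    then obtain F0 where F0: "F0 \<in> B" "A \<subseteq> F0" "F = F0 - A" by (auto simp: B'_def contract_def)
    have "finite F0" using finB F0(1) by blast
    then show "card F = c - card A" using F0 cardB card_Diff_subset finite_subset by metis
  qed
  have covD: "F \<in> B' \<and> (\<Sum>x\<in>F. N x) = 1" if "F \<in> cov" for F
    using that by (simp add: cov_def cover_matroid_def)
  have covI: "F \<in> cov" if "F \<in> B'" "(\<Sum>x\<in>F. N x) = 1" for F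
    using that by (simp add: cov_def cover_matroid_def)
  have FS: "F \<inter> S = F - {e}" if "F \<in> cov" "e \<in> F" "N e = 1" "\<forall>x\<in>F. x \<noteq> e \<longrightarrow> N x = 0" for F e
    using that covD[OF that(1)] B'sub unfolding S_def by auto
  have unif: "\<forall>F\<in>cov. finite (F \<inter> S) \<and> card (F \<inter> S) = c - card A - 1"
  proof
    fix F assume F: "F \<in> cov"
    have fF: "finite F" using covD[OF F] B'fin by blast
    obtain e where e: "e \<in> F" "N e = 1" "\<forall>x\<in>F. x \<noteq> e \<longrightarrow> N x = 0"
      using sum_one_D[OF fF] covD[OF F] by blast
    have "card (F \<inter> S) = card F - 1" using FS[OF F e] fF e(1) by simp
    then show "finite (F \<inter> S) \<and> card (F \<inter> S) = c - card A - 1"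
      using fF B'card covD[OF F] by simp
  qed
  have rhs: "J n (cover_matroid0 ({1..n} - A) B' N) = {m \<in> monoms n. \<forall>F\<in>cov. \<exists>x\<in>F \<inter> S. 0 < m x}"
  proof -
    have "cover_matroid0 ({1..n} - A) B' N = (\<lambda>F. F \<inter> S) ` cov"
      unfolding cover_matroid0_def S_def[symmetric] cov_def[symmetric]
      by (rule restrict_uniform[OF unif])
    then show ?thesis by (auto simp: J_iff)
  qed
  have "colon_prec n B vs r N = {m \<in> monoms n. \<forall>F\<in>cov. \<exists>x\<in>F \<inter> S. 0 < m x}"
  proof (intro set_eqI iffI)
    fix m assume "m \<in> colon_prec n B vs r N"
    then obtain D where m: "m \<in> monoms n" and DJ: "D \<in> mingens (J n B)" and pr: "prec n B vs r D N"
      and Dle: "D \<le> (\<lambda>x. m x + N x)" by (auto simp: colon_prec_def)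
    note lcD = level_char[OF exB finB vsB DJ]
    have ki: "i \<le> level_index n B vs D" using pr i_def by (auto simp: prec_def)
    have DB': "D \<in> mingens (J n B')"
      using chain[OF exB finB vsB ki lcD(2)[folded lcD(1)] lcD(3)[folded lcD(1)]]
      by (simp add: Jseq_def B'_def A_def)
    have DN: "D \<noteq> N"
    proof
      assume "D = N"
      then have "(N, N) \<in> r i" using pr i_def by (auto simp: prec_def)
      moreover have "irrefl (r i)" using ord il by (simp add: strict_linear_order_on_def)
      ultimately show False by (simp add: irrefl_def)
    qed
    show "m \<in> {m \<in> monoms n. \<forall>F\<in>cov. \<exists>x\<in>F \<inter> S. 0 < m x}"
    proof (intro CollectI conjI ballI m)
      fix F assume F: "F \<in> cov"
      have fF: "finite F" using covD[OF F] B'fin by blast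
      obtain e where e: "e \<in> F" "N e = 1" "\<forall>x\<in>F. x \<noteq> e \<longrightarrow> N x = 0"
        using sum_one_D[OF fF] covD[OF F] by blast
      show "\<exists>x\<in>F \<inter> S. 0 < m x"
      proof (rule ccontr)
        assume nm: "\<not> (\<exists>x\<in>F \<inter> S. 0 < m x)"
        have "\<forall>x\<in>F. 0 < D x \<longrightarrow> x = e"
        proof (intro ballI impI)
          fix x assume x: "x \<in> F" "0 < D x"
          show "x = e"
          proof (rule ccontr)
            assume "x \<noteq> e"
            then have "N x = 0" using e x by blast
            moreover have "F \<subseteq> {1..n} - A" using covD[OF F] B'sub by blast
            ultimately have "x \<in> F \<inter> S" using x unfolding S_def by blast
            then have "m x = 0" using nm by auto
            moreover have "D x \<le> m x + N x" using Dle by (simp add: le_fun_def)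
            ultimately show False using x(2) \<open>N x = 0\<close> by simp
          qed
        qed
        moreover have "\<forall>x\<in>F. 0 < N x \<longrightarrow> x = e" using e by auto
        ultimately have "N = D"
          using fund_cocircuit_unique[OF exB' _ _ e(1) NB' _ DB'] covD[OF F] B'sub by blast
        then show False using DN by simp
      qed
    qed
  next
    fix m assume "m \<in> {m \<in> monoms n. \<forall>F\<in>cov. \<exists>x\<in>F \<inter> S. 0 < m x}"
    then have m: "m \<in> monoms n" and mc: "\<forall>F\<in>cov. \<exists>x\<in>F \<inter> S. 0 < m x" by auto
    define w where "w x = (if x = v then 0 else m x + N x)" for x
    have NJm: "N \<in> monoms n" using NB'J by (simp add: J_iff)
    have wJ: "w \<in> J n (contract B (insert v A))"
      unfolding J_iff
    proof (intro conjI ballI)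
      show "w \<in> monoms n" using m NJm by (auto simp: monoms_def w_def)
      fix G' assume "G' \<in> contract B (insert v A)"
      then obtain F0 where F0: "F0 \<in> B" "insert v A \<subseteq> F0" "G' = F0 - insert v A"
        by (auto simp: contract_def)
      define G where "G = F0 - A"
      have GB': "G \<in> B'" using F0 by (auto simp: B'_def contract_def G_def)
      obtain z where z: "z \<in> G" "0 < N z" using NB'J GB' by (auto simp: J_iff)
      show "\<exists>x\<in>G'. 0 < w x"
      proof (cases "\<exists>z\<in>G. z \<noteq> v \<and> 0 < N z")
        case True
        then obtain z where "z \<in> G" "z \<noteq> v" "0 < N z" by blast
        then show ?thesis using F0(3) by (intro bexI[of _ z]) (auto simp: w_def G_def)
      next
        case False
        have vG: "v \<in> G" using z False by (cases "z = v") auto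
        have "N v = 1" using Nv Nle1[of v] by simp
        moreover have "finite G" using GB' B'fin by blast
        ultimately have "(\<Sum>x\<in>G. N x) = 1" using sum_one_I[of G v N] vG False by auto
        then have "G \<in> cov" using covI GB' by blast
        then obtain x where x: "x \<in> G \<inter> S" "0 < m x" using mc by blast
        have "x \<noteq> v" using x Nv unfolding S_def by auto
        then show ?thesis using x F0(3) by (intro bexI[of _ x]) (auto simp: w_def G_def)
      qed
    qed
    have "J n (contract B (insert v A)) \<subseteq> monoms n" by (auto simp: J_iff)
    then obtain D where D: "D \<in> mingens (J n (contract B (insert v A)))" "D \<le> w"
      using exists_mingen_below[OF wJ] by blast
    have DS: "D \<in> mingens (Jseq n B vs (Suc i))" using D(1) Jseq_Suc[OF iL] by (simp add: v_def A_def)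
    have D0: "D \<in> mingens (J n B)"
      using chain[OF exB finB vsB _ _ DS, of 0] iL by (simp add: Jseq_0)
    note lcD = level_char[OF exB finB vsB D0]
    have "Suc i \<le> level_index n B vs D" using lcD(1) lcD(5)[of "Suc i"] iL DS by simp
    then have pr: "prec n B vs r D N" by (simp add: prec_def i_def)
    have "D x \<le> m x + N x" for x
      using le_funD[OF D(2), of x] by (simp add: w_def split: if_splits)
    then have "D \<le> (\<lambda>x. m x + N x)" by (simp add: le_fun_def)
    then show "m \<in> colon_prec n B vs r N" using m D0 pr by (auto simp: colon_prec_def)
  qed
  then show ?thesis using rhs by (simp add: i_def A_def B'_def)
qed


theorem theorem4p13:
  fixes n c :: nat and B :: "nat set set"
  assumes "is_matroid {1..n} B" and "\<forall>F\<in>B. card F = c"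
  shows "(\<forall>vs r N. distinct vs \<and> set vs \<in> B
            \<and> (\<forall>i\<le>c. strict_linear_order_on (level n B vs i) (r i))
            \<and> N \<in> mingens (J n B)
            \<and> (\<exists>N'\<in>mingens (J n B). prec n B vs r N' N)
          \<longrightarrow> colon_prec n B vs r N =
              (if level_index n B vs N = 0 then J n (cover_matroid0 {1..n} B N)
               else J n (cover_matroid0 ({1..n} - set (take (level_index n B vs N) vs))
                          (contract B (set (take (level_index n B vs N) vs))) N)))
       \<and> (\<forall>N\<in>mingens (J n B). \<exists>vs. distinct vs \<and> set vs \<in> B \<and> level_index n B vs N = 0)"
proof -
  have exB: "exch B" using exch_matroid[OF assms(1)] .
  have subB: "\<forall>F\<in>B. F \<subseteq> {1..n}" using assms(1) by (simp add: is_matroid_def)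
  have finB: "\<forall>F\<in>B. finite F" using subB finite_subset by blast
  have Bne: "B \<noteq> {}" using assms(1) by (simp add: is_matroid_def)
  show ?thesis
  proof (intro conjI allI impI ballI)
    fix vs r N
    assume H: "distinct vs \<and> set vs \<in> B
            \<and> (\<forall>i\<le>c. strict_linear_order_on (level n B vs i) (r i))
            \<and> N \<in> mingens (J n B)
            \<and> (\<exists>N'\<in>mingens (J n B). prec n B vs r N' N)"
    have dist: "distinct vs" and vsB: "set vs \<in> B" and NJ: "N \<in> mingens (J n B)"
      and ord0: "\<forall>i\<le>c. strict_linear_order_on (level n B vs i) (r i)" using H by auto
    have "length vs = c" using assms(2) vsB dist distinct_card by metis
    then have ord: "\<forall>i\<le>length vs. strict_linear_order_on (level n B vs i) (r i)" using ord0 by simp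
    note M = main_part[OF exB subB assms(2) dist vsB ord NJ]
    show "colon_prec n B vs r N =
              (if level_index n B vs N = 0 then J n (cover_matroid0 {1..n} B N)
               else J n (cover_matroid0 ({1..n} - set (take (level_index n B vs N) vs))
                          (contract B (set (take (level_index n B vs N) vs))) N))"
      using M by (simp add: contract_empty)
  next
    fix N assume NJ: "N \<in> mingens (J n B)"
    obtain P where P: "P \<in> B" using Bne by blast
    obtain v where v: "v \<in> P" "0 < N v"
      using mingensD(1)[OF NJ] P unfolding J_iff by blast
    have fP: "finite P" using finB P by blast
    define vs where "vs = v # sorted_list_of_set (P - {v})"
    have dist: "distinct vs" using fP by (simp add: vs_def)
    have setvs: "set vs = P" using fP v(1) by (auto simp: vs_def)
    have vsB: "set vs \<in> B" using setvs P by simp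
    note lc = level_char[OF exB finB vsB NJ]
    have "level_index n B vs N = 0"
    proof (rule ccontr)
      assume ne: "level_index n B vs N \<noteq> 0"
      have "N \<in> mingens (Jseq n B vs 1)"
        using chain[OF exB finB vsB _ lc(2)[folded lc(1)] lc(3)[folded lc(1)], of 1] ne by simp
      then have "N \<in> mingens (J n (contract B (insert v {})))"
        by (simp add: Jseq_def vs_def)
      then have "N v = 0" by (rule mingens_zero)
      then show False using v by simp
    qed
    then show "\<exists>vs. distinct vs \<and> set vs \<in> B \<and> level_index n B vs N = 0" using dist vsB by blast
  qed
qed

end
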